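(* Let $G_1$ be a graph on $n$ nodes with Laplacian $Q_1$, and let $G_1^c$ be its complement, whose Laplacian is $nI-J-Q_1$ ($J$ the $n\times n$ all-one matrix). For $p\ge0$ let $$Q(p)=\begin{bmatrix} Q_1+npI & -pJ\\ -pJ & nI-J-Q_1+npI\end{bmatrix}$$ (the graph $G_1$ coupled to $G_1^c$ by an $n$-to-$n$ interconnection of weight $p$), with eigenvalues $0=\mu_N(p)\le\mu_{N-1}(p)\le\dots\le\mu_1(p)$, $N=2n$. Define $p^*=\sup\big(\{0\}\cup\{p>0:\ \mu_{N-1}(p)=2np\}\big)$. Then $$p^*=\min\left(\frac{\mu_{n-1}(Q_1)}{n},\ 1-\frac{\mu_1(Q_1)}{n}\right),$$ where $\mu_{n-1}(Q_1)$ and $\mu_1(Q_1)$ are the second smallest and the largest eigenvalue of $Q_1$, respectively.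
   Context: $2np$ is an eigenvalue of $Q(p)$ with eigenvector $[u^T,-u^T]^T$, $u$ the all-one vector; $p^*$ is the structural transition threshold, described in the paper as the coupling beyond which the algebraic connectivity $\mu_{N-1}$ no longer equals $2np$ (formalized here as the supremum). *)

theory Defs
  imports "Jordan_Normal_Form.Char_Poly" "HOL-Computational_Algebra.Polynomial"
begin

definition simple_graph :: "nat \<Rightarrow> (nat \<Rightarrow> nat \<Rightarrow> bool) \<Rightarrow> bool" where
  "simple_graph n E \<longleftrightarrow> (\<forall>i<n. \<forall>j<n. E i j = E j i) \<and> (\<forall>i<n. \<not> E i i)"

definition laplacian :: "nat \<Rightarrow> (nat \<Rightarrow> nat \<Rightarrow> bool) \<Rightarrow> real mat" where
  "laplacian n E = mat n n (\<lambda>(i,j). if i = j then real (card {k. k < n \<and> E i k})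
                                      else if E i j then -1 else 0)"

definition ones_mat :: "nat \<Rightarrow> real mat" where
  "ones_mat n = mat n n (\<lambda>_. 1)"

text \<open>Eigenvalues with multiplicity (roots of the characteristic polynomial), in the paper's
  descending indexing: mu A 1 \<ge> mu A 2 \<ge> ... \<ge> mu A (dim A).\<close>
definition mu :: "real mat \<Rightarrow> nat \<Rightarrow> real" where
  "mu A k = rev (sorted_list_of_multiset (proots (char_poly A))) ! (k - 1)"

definition coupled_Q :: "nat \<Rightarrow> real mat \<Rightarrow> real \<Rightarrow> real mat" where
  "coupled_Q n Q1 p = four_block_mat
      (Q1 + (real n * p) \<cdot>\<^sub>m 1\<^sub>m n)   ((- p) \<cdot>\<^sub>m ones_mat n)
      ((- p) \<cdot>\<^sub>m ones_mat n)           (real n \<cdot>\<^sub>m 1\<^sub>m n - ones_mat n - Q1 + (real n * p) \<cdot>\<^sub>m 1\<^sub>m n)"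

definition p_star :: "nat \<Rightarrow> real mat \<Rightarrow> real" where
  "p_star n Q1 = Sup ({0} \<union> {p. p > 0 \<and> mu (coupled_Q n Q1 p) (2 * n - 1) = 2 * real n * p})"

end

theory Submission
  imports Defs
begin

lemma lap_carrier[simp]: "laplacian n E \<in> carrier_mat n n"
  by (simp add: laplacian_def)

lemma lap_dims[simp]: "dim_row (laplacian n E) = n" "dim_col (laplacian n E) = n"
  by (simp_all add: laplacian_def)

lemma lap_index: "i < n \<Longrightarrow> j < n \<Longrightarrow> laplacian n E $$ (i,j) =
  (if i = j then real (card {k. k < n \<and> E i k}) else if E i j then -1 else 0)"
  by (simp add: laplacian_def)

lemma card_as_sum: "real (card {k. k < (n::nat) \<and> P k}) = (\<Sum>k<n. if P k then 1 else 0)"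
proof -
  have "{k. k < n \<and> P k} = {k \<in> {..<n}. P k}" by auto
  hence "real (card {k. k < n \<and> P k}) = (\<Sum>k\<in>{k \<in> {..<n}. P k}. 1)" by simp
  also have "\<dots> = (\<Sum>k<n. if P k then 1 else 0)"
    using sum.inter_filter[of "{..<n}" "\<lambda>_. 1::real" P] by simp
  finally show ?thesis .
qed

lemma lap_sym: assumes g: "simple_graph n E" and "i < n" "j < n"
  shows "laplacian n E $$ (i,j) = laplacian n E $$ (j,i)"
  using assms by (auto simp: lap_index simple_graph_def)

lemma lap_mult: assumes g: "simple_graph n E" and i: "i < n"
  shows "(\<Sum>j<n. laplacian n E $$ (i,j) * x j) = (\<Sum>j<n. (if E i j then 1 else 0) * (x i - x j))"
proof -
  have nE: "\<not> E i i" using g i by (auto simp: simple_graph_def)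
  have "(\<Sum>j<n. laplacian n E $$ (i,j) * x j) = (\<Sum>j<n. (if i = j then real (card {k. k < n \<and> E i k}) * x j else 0) - (if E i j then 1 else 0) * x j)"
    by (rule sum.cong, simp, auto simp: lap_index i nE)
  also have "\<dots> = real (card {k. k < n \<and> E i k}) * x i - (\<Sum>j<n. (if E i j then 1 else 0) * x j)"
    using i by (simp add: sum_subtractf)
  also have "real (card {k. k < n \<and> E i k}) = (\<Sum>j<n. if E i j then 1 else 0)" by (rule card_as_sum)
  also have "(\<Sum>j<n. if E i j then 1 else 0) * x i - (\<Sum>j<n. (if E i j then 1 else 0) * x j)
     = (\<Sum>j<n. (if E i j then 1 else 0) * (x i - x j))"
    by (simp add: right_diff_distrib sum_subtractf sum_distrib_right)
  finally show ?thesis .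
qed

lemma lap_rowsum: assumes g: "simple_graph n E" and i: "i < n"
  shows "(\<Sum>j<n. laplacian n E $$ (i,j)) = 0"
  using lap_mult[OF g i, of "\<lambda>_. 1"] by simp

lemma lap_form_nonneg: assumes g: "simple_graph n E"
  shows "0 \<le> (\<Sum>i<n. x i * (\<Sum>j<n. laplacian n E $$ (i,j) * x j))"
proof -
  define w where "w i j = (if E i j then 1 else (0::real))" for i j
  have ws: "w i j = w j i" if "i<n" "j<n" for i j using g that by (auto simp: w_def simple_graph_def)
  define S where "S = (\<Sum>i<n. x i * (\<Sum>j<n. laplacian n E $$ (i,j) * x j))"
  have "S = (\<Sum>i<n. \<Sum>j<n. w i j * (x i * (x i - x j)))"
    unfolding S_def by (rule sum.cong, simp, subst lap_mult[OF g], simp, simp add: w_def sum_distrib_left algebra_simps)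
  note S1 = this
  also have "\<dots> = (\<Sum>j<n. \<Sum>i<n. w i j * (x i * (x i - x j)))" by (rule sum.swap)
  also have "\<dots> = (\<Sum>i<n. \<Sum>j<n. w i j * (x j * (x j - x i)))"
    by (rule sum.cong, simp, rule sum.cong, simp, simp add: ws)
  finally have S2: "S = \<dots>" .
  have "2 * S = S + S" by simp
  also have "\<dots> = (\<Sum>i<n. \<Sum>j<n. w i j * (x i * (x i - x j)) + w i j * (x j * (x j - x i)))"
    by (subst S1, subst S2, simp add: sum.distrib)
  also have "\<dots> = (\<Sum>i<n. \<Sum>j<n. w i j * (x i - x j)^2)"
    by (simp add: power2_eq_square algebra_simps)
  also have "\<dots> \<ge> 0" by (intro sum_nonneg) (auto simp: w_def)
  finally show ?thesis unfolding S_def by simp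
qed

lemma compl_graph: "simple_graph n E \<Longrightarrow> simple_graph n (\<lambda>i j. i \<noteq> j \<and> \<not> E i j)"
  by (auto simp: simple_graph_def)

lemma compl_lap_index: assumes g: "simple_graph n E" and i: "i < n" and j: "j < n"
  shows "laplacian n (\<lambda>i j. i \<noteq> j \<and> \<not> E i j) $$ (i,j) =
     (if i = j then real n else 0) - 1 - laplacian n E $$ (i,j)"
proof (cases "i = j")
  case True
  have nE: "\<not> E i i" using g i by (auto simp: simple_graph_def)
  have "real (card {k. k < n \<and> i \<noteq> k \<and> \<not> E i k}) = (\<Sum>k<n. if i \<noteq> k \<and> \<not> E i k then 1 else 0)"
    by (rule card_as_sum)
  also have "\<dots> = (\<Sum>k<n. 1 - (if i = k then 1 else 0) - (if E i k then 1 else 0))"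
    by (rule sum.cong) (auto simp: nE)
  also have "\<dots> = real n - 1 - (\<Sum>k<n. if E i k then 1 else 0)"
    using i by (simp add: sum_subtractf)
  also have "(\<Sum>k<n. if E i k then 1 else 0) = real (card {k. k < n \<and> E i k})"
    by (rule card_as_sum[symmetric])
  finally show ?thesis using True i by (simp add: lap_index)
qed (use i j in \<open>auto simp: lap_index\<close>)

lemma lap_eig_bounds: assumes g: "simple_graph n E" and r: "poly (char_poly (laplacian n E)) l = 0"
  shows "0 \<le> l \<and> l \<le> real n"
proof -
  let ?L = "laplacian n E"
  have "eigenvalue ?L l" using eigenvalue_root_char_poly[OF lap_carrier] r by simp
  then obtain v where ev: "eigenvector ?L v l" by (auto simp: eigenvalue_def)
  hence v: "v \<in> carrier_vec n" "v \<noteq> 0\<^sub>v n" "?L *\<^sub>v v = l \<cdot>\<^sub>v v" by (auto simp: eigenvector_def)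
  define x where "x i = v $ i" for i
  have Lx: "(\<Sum>j<n. ?L $$ (i,j) * x j) = l * x i" if "i < n" for i
  proof -
    have "(?L *\<^sub>v v) $ i = l * x i" using v that by (simp add: x_def)
    moreover have "(?L *\<^sub>v v) $ i = (\<Sum>j<n. ?L $$ (i,j) * x j)" using v(1) that
      by (simp add: scalar_prod_def x_def row_def lessThan_atLeast0)
    ultimately show ?thesis by simp
  qed
  define s where "s = (\<Sum>i<n. x i * x i)"
  have spos: "s > 0"
  proof -
    have s0: "s \<ge> 0" unfolding s_def by (intro sum_nonneg) auto
    obtain i where i: "i < n" "x i \<noteq> 0"
    proof (rule ccontr)
      assume "\<not> thesis"
      hence "\<forall>i<n. x i = 0" using that by blast
      hence "v = 0\<^sub>v n" using v(1) by (intro eq_vecI) (auto simp: x_def)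
      with v(2) show False by simp
    qed
    have "s \<noteq> 0"
    proof
      assume "s = 0"
      hence "\<forall>k\<in>{..<n}. x k * x k = 0" unfolding s_def
        by (subst sum_nonneg_eq_0_iff[symmetric]) auto
      with i show False by auto
    qed
    with s0 show ?thesis by simp
  qed
  have form: "(\<Sum>i<n. x i * (\<Sum>j<n. ?L $$ (i,j) * x j)) = l * s"
  proof -
    have "(\<Sum>i<n. x i * (\<Sum>j<n. ?L $$ (i,j) * x j)) = (\<Sum>i<n. x i * (l * x i))"
      by (rule sum.cong) (simp_all add: Lx)
    thus ?thesis unfolding s_def by (simp add: sum_distrib_left algebra_simps)
  qed
  from lap_form_nonneg[OF g, of x] form spos have l0: "0 \<le> l"
    by (simp add: zero_le_mult_iff)
  have ln: "l \<le> real n"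
  proof (cases "l = 0")
    case False
    have "l * (\<Sum>i<n. x i) = (\<Sum>i<n. \<Sum>j<n. ?L $$ (i,j) * x j)"
      by (simp add: Lx sum_distrib_left)
    also have "\<dots> = (\<Sum>j<n. \<Sum>i<n. ?L $$ (i,j) * x j)" by (rule sum.swap)
    also have "\<dots> = (\<Sum>j<n. (\<Sum>i<n. ?L $$ (j,i)) * x j)"
      by (rule sum.cong, simp, simp add: sum_distrib_right lap_sym[OF g])
    also have "\<dots> = 0" by (simp add: lap_rowsum[OF g])
    finally have sx: "(\<Sum>i<n. x i) = 0" using False by simp
    let ?E' = "\<lambda>i j. i \<noteq> j \<and> \<not> E i j"
    have Cx: "(\<Sum>j<n. laplacian n ?E' $$ (i,j) * x j) = (real n - l) * x i" if i: "i < n" for i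
    proof -
      have "(\<Sum>j<n. laplacian n ?E' $$ (i,j) * x j) =
         (\<Sum>j<n. (if i = j then real n * x j else 0) - x j - ?L $$ (i,j) * x j)"
        by (rule sum.cong, simp, simp add: compl_lap_index[OF g i] algebra_simps)
      also have "\<dots> = real n * x i - (\<Sum>j<n. x j) - l * x i"
        using i by (simp add: sum_subtractf Lx)
      finally show ?thesis using sx by (simp add: algebra_simps)
    qed
    have "0 \<le> (\<Sum>i<n. x i * (\<Sum>j<n. laplacian n ?E' $$ (i,j) * x j))"
      by (rule lap_form_nonneg[OF compl_graph[OF g]])
    also have "\<dots> = (\<Sum>i<n. x i * ((real n - l) * x i))"
      by (rule sum.cong) (simp_all add: Cx)
    also have "\<dots> = (real n - l) * s" unfolding s_def
      by (simp add: sum_distrib_left algebra_simps)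
    finally show ?thesis using spos by (simp add: zero_le_mult_iff)
  qed simp
  from l0 ln show ?thesis by simp
qed

lemma prod_list_map_remove1:
  "x \<in> set xs \<Longrightarrow> prod_list (map f xs) = f x * prod_list (map (f :: 'a \<Rightarrow> 'b :: comm_monoid_mult) (remove1 x xs))"
  by (induct xs) (auto simp: mult.left_commute)

lemma prod_of_real_aux:
  "(\<forall>a\<in>set as. Im a = 0) \<Longrightarrow>
   prod_list (map (\<lambda>a. complex_of_real x - a) as) = complex_of_real (prod_list (map (\<lambda>a. x - Re a) as))"
  by (induct as) (auto simp: complex_eq_iff)

lemma sym_real_rooted:
  fixes A :: "real mat"
  assumes A: "A \<in> carrier_mat n n" and sym: "\<And>i j. i < n \<Longrightarrow> j < n \<Longrightarrow> A $$ (i,j) = A $$ (j,i)"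
  shows "\<exists>bs. char_poly A = (\<Prod>b\<leftarrow>bs. [:- b, 1:]) \<and> length bs = n"
proof -
  let ?C = "map_mat complex_of_real A"
  have C: "?C \<in> carrier_mat n n" using A by simp
  obtain as where as: "char_poly ?C = (\<Prod>a\<leftarrow>as. [:- a, 1:])" "length as = n"
    using char_poly_factorized[OF C] by blast
  have real: "Im a = 0" if a: "a \<in> set as" for a
  proof -
    have "poly (char_poly ?C) a = 0" unfolding as(1) using a
      by (auto simp: poly_prod_list prod_list_zero_iff)
    then have "eigenvalue ?C a" using eigenvalue_root_char_poly[OF C] by simp
    then obtain w where "eigenvector ?C w a" by (auto simp: eigenvalue_def)
    hence w: "w \<in> carrier_vec n" "w \<noteq> 0\<^sub>v n" "?C *\<^sub>v w = a \<cdot>\<^sub>v w"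
      using A by (auto simp: eigenvector_def)
    define z where "z i = w $ i" for i
    have Cz: "(\<Sum>j<n. of_real (A $$ (i,j)) * z j) = a * z i" if i: "i < n" for i
    proof -
      have "(?C *\<^sub>v w) $ i = a * z i" using w i by (simp add: z_def)
      moreover have "(?C *\<^sub>v w) $ i = (\<Sum>j<n. of_real (A $$ (i,j)) * z j)" using w(1) i A
        by (simp add: scalar_prod_def z_def row_def lessThan_atLeast0)
      ultimately show ?thesis by simp
    qed
    define s where "s = (\<Sum>i<n. cnj (z i) * (\<Sum>j<n. of_real (A $$ (i,j)) * z j))"
    define r where "r = (\<Sum>i<n. (Re (z i))\<^sup>2 + (Im (z i))\<^sup>2)"
    have s1: "s = a * of_real r"
    proof -
      have "s = (\<Sum>i<n. a * (z i * cnj (z i)))" unfolding s_def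
        by (rule sum.cong) (simp_all add: Cz)
      also have "\<dots> = a * of_real r" unfolding r_def
        by (simp add: complex_mult_cnj sum_distrib_left)
      finally show ?thesis .
    qed
    have s2: "cnj s = s"
    proof -
      have "cnj s = (\<Sum>i<n. \<Sum>j<n. z i * of_real (A $$ (i,j)) * cnj (z j))"
        unfolding s_def by (simp add: sum_distrib_left mult.assoc)
      also have "\<dots> = (\<Sum>j<n. \<Sum>i<n. z i * of_real (A $$ (i,j)) * cnj (z j))" by (rule sum.swap)
      also have "\<dots> = (\<Sum>i<n. \<Sum>j<n. cnj (z i) * (of_real (A $$ (i,j)) * z j))"
        by (rule sum.cong, simp, rule sum.cong, simp, simp add: sym mult.commute mult.left_commute)
      also have "\<dots> = s" unfolding s_def by (simp add: sum_distrib_left)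
      finally show ?thesis .
    qed
    have rpos: "r > 0"
    proof -
      have r0: "r \<ge> 0" unfolding r_def by (intro sum_nonneg) auto
      obtain i where i: "i < n" "z i \<noteq> 0"
      proof (rule ccontr)
        assume "\<not> thesis"
        hence "\<forall>i<n. z i = 0" using that by blast
        hence "w = 0\<^sub>v n" using w(1) by (intro eq_vecI) (auto simp: z_def)
        with w(2) show False by simp
      qed
      have "r \<noteq> 0"
      proof
        assume "r = 0"
        hence "\<forall>k\<in>{..<n}. (Re (z k))\<^sup>2 + (Im (z k))\<^sup>2 = 0" unfolding r_def
          by (subst sum_nonneg_eq_0_iff[symmetric]) auto
        with i show False by (auto simp: complex_eq_iff)
      qed
      with r0 show ?thesis by simp
    qed
    have "Im s = 0" using s2 by (metis complex_cnj_cancel_iff complex_cnj_complex_of_real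
          Im_complex_of_real Reals_cnj_iff Reals_def rangeE) 
    hence "Im a * r = 0" using s1 by simp
    with rpos show ?thesis by simp
  qed
  define bs where "bs = map Re as"
  have "poly (char_poly A) x = poly (\<Prod>b\<leftarrow>bs. [:- b, 1:]) x" for x
  proof -
    have "complex_of_real (poly (char_poly A) x) = poly (map_poly of_real (char_poly A)) (of_real x)"
      by (simp add: of_real_hom.poly_map_poly)
    also have "map_poly of_real (char_poly A) = char_poly ?C"
      by (rule of_real_hom.char_poly_hom[OF A, symmetric])
    also have "poly (char_poly ?C) (of_real x) = prod_list (map (\<lambda>a. complex_of_real x - a) as)"
      unfolding as(1) by (simp add: poly_prod_list o_def)
    also have "\<dots> = complex_of_real (prod_list (map (\<lambda>a. x - Re a) as))"
      using real by (intro prod_of_real_aux) auto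
    finally have "poly (char_poly A) x = prod_list (map (\<lambda>a. x - Re a) as)" by simp
    also have "\<dots> = poly (\<Prod>b\<leftarrow>bs. [:- b, 1:]) x"
      unfolding bs_def by (simp add: poly_prod_list o_def)
    finally show ?thesis .
  qed
  hence "char_poly A = (\<Prod>b\<leftarrow>bs. [:- b, 1:])" using poly_eq_poly_eq_iff by blast
  moreover have "length bs = n" using as(2) by (simp add: bs_def)
  ultimately show ?thesis by blast
qed

definition redK :: "nat \<Rightarrow> real mat \<Rightarrow> real mat" where
  "redK m X = mat m m (\<lambda>(i,j). X $$ (Suc i, Suc j) - X $$ (0, Suc j))"

lemma det_1x1: "det (mat (Suc 0) (Suc 0) (\<lambda>_. c)) = (c :: real)"
  by (subst det_lower_triangular[of 1]) (auto simp: diag_mat_def)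

lemma det_unit_lower: assumes S: "S \<in> carrier_mat N N"
  and lt: "\<And>i j. i < j \<Longrightarrow> j < N \<Longrightarrow> S $$ (i,j) = 0"
  and d: "\<And>i. i < N \<Longrightarrow> S $$ (i,i) = (1::real)"
  shows "det S = 1"
proof -
  have "diag_mat S = replicate N 1"
    using S d by (intro nth_equalityI) (auto simp: diag_mat_def)
  thus ?thesis using det_lower_triangular[OF lt S] by simp
qed

lemma rowsum_det: fixes X :: "real mat"
  assumes X: "X \<in> carrier_mat (Suc m) (Suc m)"
    and rs: "\<And>i. i < Suc m \<Longrightarrow> (\<Sum>j<Suc m. X $$ (i,j)) = c"
  shows "det X = c * det (redK m X)"
proof -
  let ?N = "Suc m"
  define S where "S = mat ?N ?N (\<lambda>(i,j). if j = 0 then 1 else if i = j then (1::real) else 0)"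
  define T where "T = mat ?N ?N (\<lambda>(i,j). if i = j then 1 else if j = 0 then (-1::real) else 0)"
  have S: "S \<in> carrier_mat ?N ?N" and T: "T \<in> carrier_mat ?N ?N" by (auto simp: S_def T_def)
  have dS: "det S = 1" by (rule det_unit_lower[OF S]) (auto simp: S_def)
  have dT: "det T = 1" by (rule det_unit_lower[OF T]) (auto simp: T_def)
  define Y where "Y = mat ?N ?N (\<lambda>(i,j). if j = 0 then c else X $$ (i,j))"
  have XS: "X * S = Y"
  proof (rule eq_matI)
    fix i j assume i: "i < dim_row Y" and j: "j < dim_col Y"
    hence i': "i < ?N" and j': "j < ?N" by (auto simp: Y_def)
    have "(X * S) $$ (i,j) = (\<Sum>k<?N. X $$ (i,k) * S $$ (k,j))"
      using X S i' j' by (simp add: scalar_prod_def lessThan_atLeast0)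
    also have "\<dots> = Y $$ (i,j)"
    proof (cases "j = 0")
      case True
      thus ?thesis using rs[OF i'] i' j' by (simp add: S_def Y_def)
    next
      case False
      have "(\<Sum>k<?N. X $$ (i,k) * S $$ (k,j)) = (\<Sum>k<?N. if k = j then X $$ (i,k) else 0)"
        by (rule sum.cong) (use False j' in \<open>auto simp: S_def\<close>)
      thus ?thesis using False i' j' by (simp add: Y_def)
    qed
    finally show "(X * S) $$ (i,j) = Y $$ (i,j)" .
  qed (use X S in \<open>auto simp: Y_def\<close>)
  define Z where "Z = four_block_mat (mat 1 1 (\<lambda>_. c)) (mat 1 m (\<lambda>(_,j). X $$ (0, Suc j))) (0\<^sub>m m 1) (redK m X)"
  have TY: "T * Y = Z"
  proof (rule eq_matI)
    fix i j assume i: "i < dim_row Z" and j: "j < dim_col Z"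
    hence i': "i < ?N" and j': "j < ?N" by (auto simp: Z_def redK_def)
    have Tik: "T $$ (i,k) = (if k = i then 1 else 0) - (if i \<noteq> 0 \<and> k = 0 then 1 else 0)" if "k < ?N" for k
      using i' that by (auto simp: T_def)
    have "(T * Y) $$ (i,j) = (\<Sum>k<?N. T $$ (i,k) * Y $$ (k,j))"
      using T i' j' by (simp add: Y_def scalar_prod_def lessThan_atLeast0)
    also have "\<dots> = (\<Sum>k<?N. (if k = i then Y $$ (k,j) else 0) - (if i \<noteq> 0 \<and> k = 0 then Y $$ (k,j) else 0))"
      by (rule sum.cong, simp, simp add: Tik left_diff_distrib)
    also have "\<dots> = Y $$ (i,j) - (if i \<noteq> 0 then Y $$ (0,j) else 0)"
      using i' by (simp add: sum_subtractf)
    also have "\<dots> = Z $$ (i,j)"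
      using i' j' by (cases i; cases j) (auto simp: Y_def Z_def redK_def)
    finally show "(T * Y) $$ (i,j) = Z $$ (i,j)" .
  qed (auto simp: Z_def T_def Y_def redK_def)
  have "det (T * (X * S)) = det X"
    using det_mult[OF T mult_carrier_mat[OF X S]] det_mult[OF X S] dS dT by simp
  also have "T * (X * S) = Z" using XS TY by simp
  also have "det Z = det (mat 1 1 (\<lambda>_. c)) * det (redK m X)"
    unfolding Z_def by (rule det_four_block_mat_lower_left_zero_col) (auto simp: redK_def)
  finally show ?thesis by (simp add: det_1x1)
qed

lemma ones_carrier[simp]: "ones_mat n \<in> carrier_mat n n"
  and ones_dims[simp]: "dim_row (ones_mat n) = n" "dim_col (ones_mat n) = n"
  by (auto simp: ones_mat_def)

lemma ones_index[simp]: "i < n \<Longrightarrow> j < n \<Longrightarrow> ones_mat n $$ (i,j) = 1"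
  by (simp add: ones_mat_def)

lemma mult_index: "X \<in> carrier_mat N N \<Longrightarrow> Y \<in> carrier_mat N N \<Longrightarrow> i < N \<Longrightarrow> j < N \<Longrightarrow>
  (X * Y) $$ (i,j) = (\<Sum>k<N. X $$ (i,k) * Y $$ (k,j))"
  by (simp add: scalar_prod_def lessThan_atLeast0)

lemma rowsum_mult: fixes X :: "real mat" assumes X: "X \<in> carrier_mat N N" and Y: "Y \<in> carrier_mat N N"
  and r: "\<And>k. k < N \<Longrightarrow> (\<Sum>j<N. Y $$ (k,j)) = r" and i: "i < N"
  shows "(\<Sum>j<N. (X * Y) $$ (i,j)) = r * (\<Sum>k<N. X $$ (i,k))"
proof -
  have "(\<Sum>j<N. (X * Y) $$ (i,j)) = (\<Sum>j<N. \<Sum>k<N. X $$ (i,k) * Y $$ (k,j))"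
    by (rule sum.cong) (simp_all add: mult_index[OF X Y i])
  also have "\<dots> = (\<Sum>k<N. \<Sum>j<N. X $$ (i,k) * Y $$ (k,j))" by (rule sum.swap)
  also have "\<dots> = (\<Sum>k<N. X $$ (i,k) * r)"
    by (rule sum.cong) (simp_all add: sum_distrib_left[symmetric] r)
  also have "\<dots> = r * (\<Sum>k<N. X $$ (i,k))" unfolding sum_distrib_left by (rule sum.cong) (simp_all add: mult.commute)
  finally show ?thesis .
qed

lemma lap_colsum: assumes g: "simple_graph n E" and j: "j < n"
  shows "(\<Sum>k<n. laplacian n E $$ (k,j)) = 0"
proof -
  have "(\<Sum>k<n. laplacian n E $$ (k,j)) = (\<Sum>k<n. laplacian n E $$ (j,k))"
    by (rule sum.cong) (simp_all add: lap_sym[OF g _ j])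
  thus ?thesis using lap_rowsum[OF g j] by simp
qed

lemma prod_list_neg: "prod_list (map (\<lambda>l. - f l) R) = (-1) ^ length R * prod_list (map (f :: 'a \<Rightarrow> real) R)"
  by (induct R) simp_all

lemma poly_lin_prod: "poly (\<Prod>a\<leftarrow>L. [:- a, 1:]) x = (\<Prod>a\<leftarrow>L. x - (a::real))"
  by (induct L) (simp_all add: left_diff_distrib)

lemma coupled_charpoly:
  assumes g: "simple_graph n E" and n: "n = Suc m"
    and cp: "char_poly (laplacian n E) = (\<Prod>b\<leftarrow>0 # R. [:- b, 1:])" and lenR: "length R = m"
  shows "char_poly (coupled_Q n (laplacian n E) p) =
     (\<Prod>a\<leftarrow>0 # 2 * real n * p # map (\<lambda>l. l + real n * p) R @ map (\<lambda>l. real n + real n * p - l) R. [:- a, 1:])"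
    (is "char_poly ?Qp = ?RHS")
proof -
  let ?Q1 = "laplacian n E"
  let ?J = "ones_mat n"
  have Q1: "?Q1 \<in> carrier_mat n n" by simp
  have Qp: "?Qp \<in> carrier_mat (n+n) (n+n)" by (simp add: coupled_Q_def)
  have q: "poly (char_poly ?Q1) t = t * prod_list (map (\<lambda>l. t - l) R)" for t
    unfolding cp by (simp add: poly_prod_list o_def)
  have key: "poly (char_poly ?Qp) x = poly ?RHS x" if x1: "x \<noteq> real n * p" and x2: "x \<noteq> real n * p + real n" for x
  proof -
    define y where "y = x - real n * p"
    have y0: "y \<noteq> 0" and yn: "y - real n \<noteq> 0" using x1 x2 by (auto simp: y_def)
    define A' where "A' = y \<cdot>\<^sub>m 1\<^sub>m n - ?Q1"
    define B' where "B' = p \<cdot>\<^sub>m ?J"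
    define D0 where "D0 = (y - real n) \<cdot>\<^sub>m 1\<^sub>m n + ?Q1"
    define D' where "D' = D0 + ?J"
    have A': "A' \<in> carrier_mat n n" and B': "B' \<in> carrier_mat n n" and D0: "D0 \<in> carrier_mat n n"
      and D': "D' \<in> carrier_mat n n" by (auto simp: A'_def B'_def D0_def D'_def)
    have A'i: "A' $$ (i,j) = (if i = j then y else 0) - ?Q1 $$ (i,j)" if "i < n" "j < n" for i j
      using that by (simp add: A'_def)
    have B'i: "B' $$ (i,j) = p" if "i < n" "j < n" for i j
      using that by (simp add: B'_def)
    have D0i: "D0 $$ (i,j) = (if i = j then y - real n else 0) + ?Q1 $$ (i,j)" if "i < n" "j < n" for i j
      using that by (simp add: D0_def)
    have D'i: "D' $$ (i,j) = D0 $$ (i,j) + 1" if "i < n" "j < n" for i j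
      using that D0 by (simp add: D'_def)
    have rsA': "(\<Sum>j<n. A' $$ (i,j)) = y" if "i < n" for i
      using that by (simp add: A'i sum_subtractf lap_rowsum[OF g])
    have rsD0: "(\<Sum>j<n. D0 $$ (i,j)) = y - real n" if "i < n" for i
      using that by (simp add: D0i sum.distrib lap_rowsum[OF g])
    have csD': "(\<Sum>k<n. D' $$ (k,j)) = y" if "j < n" for j
      using that by (simp add: D'i D0i sum.distrib lap_colsum[OF g])
    have rsD': "(\<Sum>j<n. D' $$ (i,j)) = y" if "i < n" for i
      using that by (simp add: D'i sum.distrib rsD0)
    have blk: "- char_matrix ?Qp x = four_block_mat A' B' B' D'"
    proof (rule eq_matI)
      fix i j assume "i < dim_row (four_block_mat A' B' B' D')" "j < dim_col (four_block_mat A' B' B' D')"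
      hence i: "i < n + n" and j: "j < n + n" using A' D' by auto
      have CM: "(- char_matrix ?Qp x) $$ (i,j) = (if i = j then x else 0) - ?Qp $$ (i,j)"
        using i j Qp by (simp add: char_matrix_def)
      show "(- char_matrix ?Qp x) $$ (i,j) = four_block_mat A' B' B' D' $$ (i,j)"
      proof (cases "i < n")
        case True
        show ?thesis
        proof (cases "j < n")
          case True
          thus ?thesis using \<open>i < n\<close> A' B' D' CM
            by (simp add: coupled_Q_def A'i y_def)
        next
          case False
          thus ?thesis using \<open>i < n\<close> j A' B' D' CM
            by (simp add: coupled_Q_def B'i)
        qed
      next
        case False
        show ?thesis
        proof (cases "j < n")
          case True
          thus ?thesis using \<open>\<not> i < n\<close> i A' B' D' CM
            by (simp add: coupled_Q_def B'i)
        next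
          case False
          have i': "i - n < n" and j': "j - n < n" using i j \<open>\<not> i < n\<close> False by auto
          have ij: "(i = j) = (i - n = j - n)" using \<open>\<not> i < n\<close> False by auto
          show ?thesis using \<open>\<not> i < n\<close> False i j i' j' A' B' D' CM
            by (simp add: coupled_Q_def D'i[OF i' j'] D0i[OF i' j'] y_def ij)
        qed
      qed
    qed (use A' D' Qp in \<open>auto simp: char_matrix_def\<close>)
    have comm: "B' * D' = D' * B'"
    proof (rule eq_matI)
      fix i j assume "i < dim_row (D' * B')" "j < dim_col (D' * B')"
      hence i: "i < n" and j: "j < n" using D' B' by auto
      have "(B' * D') $$ (i,j) = p * y"
        using i j by (simp add: mult_index[OF B' D'] B'i sum_distrib_left[symmetric] csD')
      moreover have "(D' * B') $$ (i,j) = p * y"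
        using i j by (simp add: mult_index[OF D' B'] B'i sum_distrib_right[symmetric] rsD')
      ultimately show "(B' * D') $$ (i,j) = (D' * B') $$ (i,j)" by simp
    qed (use B' D' in auto)
    define F where "F = A' * D0"
    define M where "M = A' * D' - B' * B'"
    have F: "F \<in> carrier_mat n n" and M: "M \<in> carrier_mat n n" using A' B' D0 D' by (auto simp: F_def M_def)
    have Mi: "M $$ (i,j) = F $$ (i,j) + y - p * p * real n" if i: "i < n" and j: "j < n" for i j
    proof -
      have "(A' * D') $$ (i,j) = (\<Sum>k<n. A' $$ (i,k) * D0 $$ (k,j) + A' $$ (i,k))"
        using i j by (simp add: mult_index[OF A' D'] D'i algebra_simps)
      also have "\<dots> = F $$ (i,j) + y"
        using i j by (simp add: sum.distrib F_def mult_index[OF A' D0] rsA')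
      finally have 1: "(A' * D') $$ (i,j) = F $$ (i,j) + y" .
      have 2: "(B' * B') $$ (i,j) = p * p * real n"
        using i j by (simp add: mult_index[OF B' B'] B'i)
      show ?thesis using 1 2 i j A' B' D' by (simp add: M_def)
    qed
    have rsF: "(\<Sum>j<n. F $$ (i,j)) = (y - real n) * y" if "i < n" for i
      unfolding F_def using rowsum_mult[OF A' D0 rsD0 that] rsA'[OF that] by simp
    have rsM: "(\<Sum>j<n. M $$ (i,j)) = y * y - p * p * real n * real n" if i: "i < n" for i
    proof -
      have "(\<Sum>j<n. M $$ (i,j)) = (\<Sum>j<n. F $$ (i,j) + (y - p * p * real n))"
        by (rule sum.cong) (simp_all add: Mi i)
      also have "\<dots> = (y - real n) * y + real n * (y - p * p * real n)"
        by (simp add: sum.distrib rsF i)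
      finally show ?thesis by (simp add: algebra_simps)
    qed
    have KMF: "redK m M = redK m F"
      by (rule eq_matI) (auto simp: redK_def Mi n)
    have detF: "det F = y * (y - real n) * det (redK m F)"
      using rowsum_det[of F m "(y - real n) * y"] F rsF n by (simp add: mult.commute)
    have detM: "det M = (y * y - p * p * real n * real n) * det (redK m F)"
      using rowsum_det[of M m "y * y - p * p * real n * real n"] M rsM n KMF by simp
    have dA': "det A' = poly (char_poly ?Q1) y"
    proof -
      have "- char_matrix ?Q1 y = A'"
        by (rule eq_matI) (auto simp: char_matrix_def A'_def)
      thus ?thesis using char_poly_matrix[OF Q1, of y] by simp
    qed
    have dD0: "det D0 = (-1) ^ n * poly (char_poly ?Q1) (real n - y)"
    proof -
      have "D0 = (-1) \<cdot>\<^sub>m (- char_matrix ?Q1 (real n - y))"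
        by (rule eq_matI) (auto simp: char_matrix_def D0_def)
      hence "det D0 = (-1) ^ n * det (- char_matrix ?Q1 (real n - y))" by (simp add: char_matrix_def)
      thus ?thesis using char_poly_matrix[OF Q1, of "real n - y"] by simp
    qed
    define P1 where "P1 = prod_list (map (\<lambda>l. y - l) R)"
    define P2 where "P2 = prod_list (map (\<lambda>l. y - real n + l) R)"
    have "prod_list (map (\<lambda>l. real n - y - l) R) = prod_list (map (\<lambda>l. - (y - real n + l)) R)"
      by (rule arg_cong[where f=prod_list], rule map_cong, auto)
    also have "\<dots> = (-1) ^ length R * P2" unfolding P2_def by (rule prod_list_neg)
    finally have "prod_list (map (\<lambda>l. real n - y - l) R) = (-1) ^ m * P2" using lenR by simp
    hence "det F = (y * P1) * ((-1) ^ n * ((real n - y) * ((-1) ^ m * P2)))"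
      unfolding F_def det_mult[OF A' D0] dA' dD0 q P1_def by simp
    also have "\<dots> = ((-1) ^ n * (-1) ^ m) * (y * (real n - y) * (P1 * P2))"
      by (simp only: mult_ac)
    also have "(-1::real) ^ n * (-1) ^ m = -1" by (simp add: n)
    also have "-1 * (y * (real n - y) * (P1 * P2)) = y * (y - real n) * (P1 * P2)"
      by (simp add: algebra_simps)
    finally have "det (redK m F) = P1 * P2" using detF y0 yn by simp
    hence detM': "det M = x * (x - 2 * real n * p) * (P1 * P2)"
      using detM by (simp add: y_def algebra_simps)
    have "poly (char_poly ?Qp) x = det (- char_matrix ?Qp x)" by (rule char_poly_matrix[OF Qp])
    also have "\<dots> = det (four_block_mat A' B' B' D')" by (simp only: blk)
    also have "\<dots> = det M" unfolding M_def by (rule det_four_block_mat[OF A' B' B' D' comm])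
    also have "\<dots> = poly ?RHS x"
    proof -
      have "poly ?RHS x = prod_list (map (\<lambda>a. x - a) (0 # 2 * real n * p # map (\<lambda>l. l + real n * p) R @ map (\<lambda>l. real n + real n * p - l) R))"
        by (rule poly_lin_prod)
      also have "\<dots> = x * (x - 2 * real n * p) * (prod_list (map (\<lambda>l. x - (l + real n * p)) R) *
          prod_list (map (\<lambda>l. x - (real n + real n * p - l)) R))"
        by (simp add: o_def mult.assoc)
      also have "map (\<lambda>l. x - (l + real n * p)) R = map (\<lambda>l. y - l) R"
        by (rule map_cong) (auto simp: y_def)
      also have "map (\<lambda>l. x - (real n + real n * p - l)) R = map (\<lambda>l. y - real n + l) R"
        by (rule map_cong) (auto simp: y_def)
      finally have "poly ?RHS x = x * (x - 2 * real n * p) * (P1 * P2)" unfolding P1_def P2_def .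
      thus ?thesis by (rule trans[OF detM' sym])
    qed
    finally show ?thesis .
  qed
  show ?thesis
  proof (rule ccontr)
    assume ne: "char_poly ?Qp \<noteq> ?RHS"
    have "char_poly ?Qp - ?RHS \<noteq> 0" using ne by (simp only: right_minus_eq not_False_eq_True)
    hence "finite {x. poly (char_poly ?Qp - ?RHS) x = 0}" by (rule poly_roots_finite)
    moreover have "UNIV - {real n * p, real n * p + real n} \<subseteq> {x. poly (char_poly ?Qp - ?RHS) x = 0}"
    proof
      fix x assume "x \<in> UNIV - {real n * p, real n * p + real n}"
      hence "x \<noteq> real n * p" "x \<noteq> real n * p + real n" by auto
      hence "poly (char_poly ?Qp) x = poly ?RHS x" by (rule key)
      thus "x \<in> {x. poly (char_poly ?Qp - ?RHS) x = 0}"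
        unfolding mem_Collect_eq poly_diff by (simp only: diff_self)
    qed
    ultimately have "finite (UNIV - {real n * p, real n * p + real n})" by (rule finite_subset[rotated])
    moreover have "infinite (UNIV - {real n * p, real n * p + real n})"
      by (rule Diff_infinite_finite) (simp_all add: infinite_UNIV_char_0)
    ultimately show False by blast
  qed
qed

lemma proots_lin: "proots (\<Prod>a\<leftarrow>L. [:- a, 1:]) = mset (L :: real list)"
proof (induct L)
  case Nil thus ?case by simp
next
  case (Cons a L)
  have nz: "(\<Prod>a\<leftarrow>L. [:- a, 1:]) \<noteq> (0 :: real poly)" by (auto simp: prod_list_zero_iff)
  have "(\<Prod>a\<leftarrow>a # L. [:- a, 1:]) = [:- a, 1:] * (\<Prod>a\<leftarrow>L. [:- a, 1:])" by simp
  hence "proots (\<Prod>a\<leftarrow>a # L. [:- a, 1:]) = proots [:- a, 1:] + proots (\<Prod>a\<leftarrow>L. [:- a, 1:])"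
    using proots_mult[of "[:- a, 1:]" "\<Prod>a\<leftarrow>L. [:- a, 1:]"] nz by simp
  moreover have "proots [:- a, 1:] = {#a#}" using proots_linear_factor[of "-a"] by simp
  ultimately show ?case using Cons by simp
qed

lemma mu_lin: "char_poly A = (\<Prod>a\<leftarrow>L. [:- a, 1:]) \<Longrightarrow> mu A k = rev (sort L) ! (k - 1)"
  by (simp add: mu_def proots_lin)

lemma sort_cons_le: "(\<forall>y\<in>set xs. a \<le> y) \<Longrightarrow> sort (a # xs) = a # sort (xs :: real list)"
  by (simp add: insort_is_Cons)

lemma sort_first: assumes ne: "xs \<noteq> []"
  shows "sort xs ! 0 \<in> set xs \<and> (\<forall>y\<in>set xs. sort xs ! 0 \<le> (y::real))"
proof -
  have len: "0 < length (sort xs)" using ne by simp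
  have s: "sorted (sort xs)" by simp
  have "sort xs ! 0 \<in> set (sort xs)" using len by (rule nth_mem)
  moreover have "sort xs ! 0 \<le> y" if "y \<in> set xs" for y
  proof -
    from that have "y \<in> set (sort xs)" by simp
    then obtain k where k: "k < length (sort xs)" "y = sort xs ! k" by (metis in_set_conv_nth)
    show ?thesis using sorted_nth_mono[OF s, of 0 k] k by simp
  qed
  ultimately show ?thesis by simp
qed

lemma sort_last: assumes ne: "xs \<noteq> []"
  shows "sort xs ! (length xs - 1) \<in> set xs \<and> (\<forall>y\<in>set xs. y \<le> sort xs ! (length xs - 1 :: nat) \<and> True) "
proof -
  have len: "length xs - 1 < length (sort xs)" using ne by simp
  have s: "sorted (sort xs)" by simp
  have "sort xs ! (length xs - 1) \<in> set (sort xs)" using len by (rule nth_mem)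
  moreover have "y \<le> sort xs ! (length xs - 1)" if "y \<in> set xs" for y
  proof -
    from that have "y \<in> set (sort xs)" by simp
    then obtain k where k: "k < length (sort xs)" "y = sort xs ! k" by (metis in_set_conv_nth)
    show ?thesis using sorted_nth_mono[OF s, of k "length xs - 1"] k len by simp
  qed
  ultimately show ?thesis by simp
qed

theorem mainTheorem6:
  fixes n :: nat and E :: "nat \<Rightarrow> nat \<Rightarrow> bool"
  assumes "n \<ge> 2" and "simple_graph n E"
  shows "p_star n (laplacian n E) =
           min (mu (laplacian n E) (n - 1) / real n) (1 - mu (laplacian n E) 1 / real n)"
proof -
  let ?Q1 = "laplacian n E"
  note g = assms(2)
  obtain m' where n: "n = Suc (Suc m')" using assms(1) by (metis add_2_eq_Suc le_Suc_ex)
  define m where "m = Suc m'"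
  have nm: "n = Suc m" by (simp add: n m_def)
  have npos: "real n > 0" using n by simp
  obtain bs where bs: "char_poly ?Q1 = (\<Prod>b\<leftarrow>bs. [:- b, 1:])" "length bs = n"
    using sym_real_rooted[OF lap_carrier, of n E] lap_sym[OF g] by blast
  have root0: "poly (char_poly ?Q1) 0 = 0"
  proof -
    have X: "- char_matrix ?Q1 0 \<in> carrier_mat (Suc m) (Suc m)" using nm by (simp add: char_matrix_def)
    have rs: "(\<Sum>j<Suc m. (- char_matrix ?Q1 0) $$ (i,j)) = 0" if i: "i < Suc m" for i
    proof -
      have "(\<Sum>j<Suc m. (- char_matrix ?Q1 0) $$ (i,j)) = (\<Sum>j<n. - ?Q1 $$ (i,j))"
        using i nm by (intro sum.cong) (auto simp: char_matrix_def)
      also have "\<dots> = 0" using lap_rowsum[OF g, of i] i nm by (simp add: sum_negf)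
      finally show ?thesis .
    qed
    have "poly (char_poly ?Q1) 0 = det (- char_matrix ?Q1 0)" by (rule char_poly_matrix[OF lap_carrier])
    also have "\<dots> = 0 * det (redK m (- char_matrix ?Q1 0))" by (rule rowsum_det[OF X rs])
    finally show ?thesis by simp
  qed
  have z: "0 \<in> set bs" using root0 unfolding bs(1)
    by (auto simp: poly_lin_prod prod_list_zero_iff)
  define R where "R = remove1 0 bs"
  have cp: "char_poly ?Q1 = (\<Prod>b\<leftarrow>0 # R. [:- b, 1:])"
    using bs(1) prod_list_map_remove1[OF z, of "\<lambda>b. [:- b, 1:]"] by (simp add: R_def)
  have lenR: "length R = m" using bs(2) z by (simp add: R_def length_remove1 nm)
  have Rb: "0 \<le> l \<and> l \<le> real n" if "l \<in> set R" for l
  proof -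
    have "poly (char_poly ?Q1) l = 0" using that unfolding cp
      by (auto simp: poly_lin_prod prod_list_zero_iff)
    thus ?thesis by (rule lap_eig_bounds[OF g])
  qed
  have Rne: "R \<noteq> []" using lenR by (auto simp: m_def)
  define a where "a = sort R ! 0"
  define b where "b = sort R ! m'"
  have a: "a \<in> set R" "\<forall>l\<in>set R. a \<le> l" using sort_first[OF Rne] by (simp_all add: a_def)
  have b: "b \<in> set R" "\<forall>l\<in>set R. l \<le> b" using sort_last[OF Rne] lenR by (simp_all add: b_def m_def)
  have sQ1: "sort (0 # R) = 0 # sort R" using Rb by (intro sort_cons_le) auto
  have mu1: "mu ?Q1 1 = b"
    unfolding mu_lin[OF cp] sQ1 by (subst rev_nth) (simp_all add: lenR b_def m_def)
  have mun1: "mu ?Q1 (n - 1) = a"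
    unfolding mu_lin[OF cp] sQ1 by (subst rev_nth) (simp_all add: lenR a_def m_def n)
  have cond: "(mu (coupled_Q n ?Q1 p) (2 * n - 1) = 2 * real n * p) \<longleftrightarrow>
      (real n * p \<le> a \<and> b \<le> real n - real n * p)" if p: "p > 0" for p
  proof -
    define L' where "L' = 2 * real n * p # map (\<lambda>l. l + real n * p) R @ map (\<lambda>l. real n + real n * p - l) R"
    have cpQ: "char_poly (coupled_Q n ?Q1 p) = (\<Prod>a\<leftarrow>0 # L'. [:- a, 1:])"
      using coupled_charpoly[OF g nm cp lenR, of p] by (simp add: L'_def)
    have np: "real n * p > 0" using npos p by simp
    have pos: "\<forall>y\<in>set L'. 0 \<le> y"
    proof
      fix y assume "y \<in> set L'"
      then consider "y = 2 * real n * p" | l where "l \<in> set R" "y = l + real n * p"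
        | l where "l \<in> set R" "y = real n + real n * p - l" by (auto simp: L'_def)
      thus "0 \<le> y"
      proof cases
        case 1 thus ?thesis using np by (simp add: mult.commute)
      next
        case (2 l) thus ?thesis using Rb[OF 2(1)] np by simp
      next
        case (3 l) thus ?thesis using Rb[OF 3(1)] np by simp
      qed
    qed
    have sL: "sort (0 # L') = 0 # sort L'" using pos by (intro sort_cons_le) auto
    have lenL': "length L' = Suc (2 * m)" by (simp add: L'_def lenR)
    have mu: "mu (coupled_Q n ?Q1 p) (2 * n - 1) = sort L' ! 0"
      unfolding mu_lin[OF cpQ] sL by (subst rev_nth) (simp_all add: lenL' nm)
    have L'ne: "L' \<noteq> []" by (simp add: L'_def)
    note sf = sort_first[OF L'ne]
    show ?thesis
    proof
      assume "mu (coupled_Q n ?Q1 p) (2 * n - 1) = 2 * real n * p"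
      hence all: "\<forall>y\<in>set L'. 2 * real n * p \<le> y" using sf mu by simp
      have "2 * real n * p \<le> a + real n * p" using all a(1) by (auto simp: L'_def)
      moreover have "2 * real n * p \<le> real n + real n * p - b" using all b(1) by (auto simp: L'_def)
      ultimately show "real n * p \<le> a \<and> b \<le> real n - real n * p" by (simp add: algebra_simps)
    next
      assume ab: "real n * p \<le> a \<and> b \<le> real n - real n * p"
      have all: "\<forall>y\<in>set L'. 2 * real n * p \<le> y"
      proof
        fix y assume "y \<in> set L'"
        thus "2 * real n * p \<le> y" using ab a(2) b(2) by (auto simp: L'_def algebra_simps)
      qed
      have "sort L' ! 0 \<le> 2 * real n * p" using sf by (simp add: L'_def)
      moreover have "2 * real n * p \<le> sort L' ! 0" using sf all by simp
      ultimately show "mu (coupled_Q n ?Q1 p) (2 * n - 1) = 2 * real n * p" using mu by simp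
    qed
  qed
  define M where "M = min (a / real n) (1 - b / real n)"
  have a0: "0 \<le> a" using Rb a(1) by simp
  have bn: "b \<le> real n" using Rb b(1) by simp
  have M0: "0 \<le> M" using a0 bn npos by (simp add: M_def)
  have iff: "p \<le> M \<longleftrightarrow> (real n * p \<le> a \<and> b \<le> real n - real n * p)" for p
    using npos by (auto simp: M_def field_simps)
  have set_eq: "{0} \<union> {p. p > 0 \<and> mu (coupled_Q n ?Q1 p) (2 * n - 1) = 2 * real n * p} = {0..M}"
  proof -
    have "p \<in> {0} \<union> {p. p > 0 \<and> mu (coupled_Q n ?Q1 p) (2 * n - 1) = 2 * real n * p} \<longleftrightarrow> p \<in> {0..M}" for p
    proof (cases "p > 0")
      case True
      thus ?thesis using cond[OF True] iff[of p] by auto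
    next
      case False
      thus ?thesis using M0 by auto
    qed
    thus ?thesis by blast
  qed
  have "p_star n ?Q1 = Sup {0..M}" unfolding p_star_def set_eq ..
  also have "\<dots> = M" using M0 by (rule cSup_atLeastAtMost)
  finally show ?thesis using mu1 mun1 by (simp add: M_def)
qed

end
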